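(* Let $\mathbf{\Theta}$ be a countable set of intentions and consider the following language-generation model: an intention $\theta\sim q(\theta)$ is drawn, a message $\mathbf{x}\sim q(\mathbf{x}\mid\theta)$ is generated, and a continuation $\mathbf{y}$ is generated with $q(\mathbf{y}\mid\mathbf{x},\theta)$, so that $q(\mathbf{x},\mathbf{y})=\sum_{\theta\in\mathbf{\Theta}}q(\mathbf{x},\theta)\,q(\mathbf{y}\mid\mathbf{x},\theta)$ and $q(\mathbf{x})=\sum_{\theta}q(\mathbf{x},\theta)$. Suppose the language is $\varepsilon$-ambiguous, and let $\mathbf{x}$ be a prompt generated under intention $\theta_{\mathbf{x}}$ with ambiguity $\varepsilon(\mathbf{x})$, i.e. $\Pr(\theta_{\mathbf{x}}\mid\mathbf{x})\ge 1-\varepsilon(\mathbf{x})$. Let $p_{\mathbf{\Lambda}_*}$ be a language model whose distribution over strings equals the true marginal distribution, $p_{\mathbf{\Lambda}_*}(\mathbf{s})=q(\mathbf{s})$ for all strings $\mathbf{s}$, and let $p_{\mathbf{\Lambda}_*}(\mathbf{y}\mid\mathbf{x})=p_{\mathbf{\Lambda}_*}(\mathbf{x},\mathbf{y})/p_{\mathbf{\Lambda}_*}(\mathbf{x})$. Then for every $\mathbf{y}$, $$\big|p_{\mathbf{\Lambda}_*}(\mathbf{y}\mid\mathbf{x})-q(\mathbf{y}\mid\mathbf{x},\theta_{\mathbf{x}})\big|\le\varepsilon(\mathbf{x}).$$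
   Context: A language is $\varepsilon$-ambiguous if every message $\mathbf{x}$ it generates under intention $\theta_0$ satisfies $\Pr(\theta_0\mid\mathbf{x})\ge 1-\varepsilon(\mathbf{x})$ for some $\varepsilon(\mathbf{x})\in[0,1)$, the ambiguity of $\mathbf{x}$. Here $\Pr(\theta\mid\mathbf{x})=q(\theta,\mathbf{x})/q(\mathbf{x})$ with $q(\theta,\mathbf{x})=q(\theta)q(\mathbf{x}\mid\theta)$. *)

theory Defs
  imports "HOL-Analysis.Analysis"
begin

text \<open>Intentions of type 'th (the set Theta),
messages/continuations (strings) of type 's.
  prior th      = q(theta)
  qx th x       = q(x | theta)
  qy x th y     = q(y | x, theta)\<close>

definition qjoint_xth :: "('th \<Rightarrow> real) \<Rightarrow> ('th \<Rightarrow> 's \<Rightarrow> real) \<Rightarrow> 'th \<Rightarrow> 's \<Rightarrow> real" where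
  "qjoint_xth prior qx th x = prior th * qx th x"

definition qmarg :: "'th set \<Rightarrow> ('th \<Rightarrow> real) \<Rightarrow> ('th \<Rightarrow> 's \<Rightarrow> real) \<Rightarrow> 's \<Rightarrow> real" where
  "qmarg Theta prior qx x = (\<Sum>\<^sub>\<infinity>th\<in>Theta. qjoint_xth prior qx th x)"

definition qjoint_xy :: "'th set \<Rightarrow> ('th \<Rightarrow> real) \<Rightarrow> ('th \<Rightarrow> 's \<Rightarrow> real)
    \<Rightarrow> ('s \<Rightarrow> 'th \<Rightarrow> 's \<Rightarrow> real) \<Rightarrow> 's \<Rightarrow> 's \<Rightarrow> real" where
  "qjoint_xy Theta prior qx qy x y = (\<Sum>\<^sub>\<infinity>th\<in>Theta. qjoint_xth prior qx th x * qy x th y)"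

definition posterior :: "'th set \<Rightarrow> ('th \<Rightarrow> real) \<Rightarrow> ('th \<Rightarrow> 's \<Rightarrow> real) \<Rightarrow> 'th \<Rightarrow> 's \<Rightarrow> real" where
  "posterior Theta prior qx th x = qjoint_xth prior qx th x / qmarg Theta prior qx x"

end

theory Submission
  imports Defs
begin

theorem proposition2:
  fixes Theta :: "'th set" and prior :: "'th \<Rightarrow> real"
    and qx :: "'th \<Rightarrow> 's \<Rightarrow> real" and qy :: "'s \<Rightarrow> 'th \<Rightarrow> 's \<Rightarrow> real"
    and p_marg :: "'s \<Rightarrow> real" and p_joint :: "'s \<Rightarrow> 's \<Rightarrow> real"
    and x :: 's and th_x :: 'th and eps :: real
  assumes countable: "countable Theta"
    and prior_nonneg: "\<And>th. th \<in> Theta \<Longrightarrow> prior th \<ge> 0"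
    and prior_sum: "(prior has_sum 1) Theta"
    and qx_nonneg: "\<And>th s. th \<in> Theta \<Longrightarrow> qx th s \<ge> 0"
    and qx_sum: "\<And>th. th \<in> Theta \<Longrightarrow> (qx th has_sum 1) UNIV"
    and qy_nonneg: "\<And>th s t. th \<in> Theta \<Longrightarrow> qy s th t \<ge> 0"
    and qy_sum: "\<And>th s. th \<in> Theta \<Longrightarrow> (qy s th has_sum 1) UNIV"
    and generated: "th_x \<in> Theta" "qjoint_xth prior qx th_x x > 0"
    and eps_range: "0 \<le> eps" "eps < 1"
    and ambiguity: "posterior Theta prior qx th_x x \<ge> 1 - eps"
    and p_marg_eq: "\<And>s. p_marg s = qmarg Theta prior qx s"
    and p_joint_eq: "\<And>s t. p_joint s t = qjoint_xy Theta prior qx qy s t"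
  shows "\<forall>y. \<bar>p_joint x y / p_marg x - qy x th_x y\<bar> \<le> eps"
proof
  fix y
  define w where "w = (\<lambda>th. qjoint_xth prior qx th x)"
  define v where "v = (\<lambda>th. w th * qy x th y)"
  define W where "W = Theta - {th_x}"
  have Th: "Theta = insert th_x W" "th_x \<notin> W" using generated(1) unfolding W_def by auto
  have qx1: "qx th x \<le> 1" if "th \<in> Theta" for th
    using finite_sum_le_has_sum[OF qx_sum[OF that], of "{x}"] qx_nonneg[OF that] by auto
  have qy1: "qy x th y \<le> 1" if "th \<in> Theta" for th
    using finite_sum_le_has_sum[OF qy_sum[OF that], of "{y}"] qy_nonneg[OF that] by auto
  have w0: "w th \<ge> 0" if "th \<in> Theta" for th
    using prior_nonneg[OF that] qx_nonneg[OF that] unfolding w_def qjoint_xth_def by simp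
  have wle: "w th \<le> prior th" if "th \<in> Theta" for th
    using prior_nonneg[OF that] qx1[OF that] unfolding w_def qjoint_xth_def
    by (simp add: mult_left_le)
  have v0: "v th \<ge> 0" if "th \<in> Theta" for th
    using w0[OF that] qy_nonneg[OF that] unfolding v_def by simp
  have vle: "v th \<le> w th" if "th \<in> Theta" for th
    using w0[OF that] qy1[OF that] unfolding v_def by (simp add: mult_left_le)
  have ws: "w summable_on Theta"
    using summable_on_comparison_test[of prior Theta w] prior_sum wle w0
    by (auto simp: has_sum_imp_summable)
  have vs: "v summable_on Theta"
    using summable_on_comparison_test[OF ws, of v] vle v0 by auto
  have wsW: "w summable_on W" using summable_on_subset[OF ws] Th by auto
  have vsW: "v summable_on W" using summable_on_subset[OF vs] Th by auto
  define R where "R = infsum w W"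
  define S where "S = infsum v W"
  have Z: "qmarg Theta prior qx x = w th_x + R"
    unfolding qmarg_def R_def w_def[symmetric] using infsum_insert[OF wsW Th(2)] Th(1) by simp
  have J: "qjoint_xy Theta prior qx qy x y = v th_x + S"
  proof -
    have "qjoint_xy Theta prior qx qy x y = infsum v Theta"
      unfolding qjoint_xy_def v_def w_def ..
    thus ?thesis unfolding S_def using infsum_insert[OF vsW Th(2)] Th(1) by simp
  qed
  have R0: "R \<ge> 0" unfolding R_def using w0 Th by (auto intro!: infsum_nonneg)
  have S0: "S \<ge> 0" unfolding S_def using v0 Th by (auto intro!: infsum_nonneg)
  have SR: "S \<le> R" unfolding S_def R_def using vle Th by (auto intro!: infsum_mono vsW wsW)
  define q0 where "q0 = qy x th_x y"
  have q0: "0 \<le> q0" "q0 \<le> 1" using qy_nonneg qy1 generated(1) unfolding q0_def by auto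
  have a: "w th_x > 0" using generated(2) unfolding w_def .
  have vx: "v th_x = w th_x * q0" unfolding v_def q0_def ..
  have Zp: "w th_x + R > 0" using a R0 by simp
  have post: "w th_x / (w th_x + R) \<ge> 1 - eps"
    using ambiguity unfolding posterior_def Z by (simp add: w_def)
  hence "w th_x \<ge> (1 - eps) * (w th_x + R)" using Zp by (simp add: field_simps)
  hence Rle: "R \<le> eps * (w th_x + R)" by (simp add: algebra_simps)
  have RQ: "R * q0 \<le> R" "0 \<le> R * q0" using R0 q0 by (auto simp: mult_left_le)
  have eq: "(v th_x + S) / (w th_x + R) - q0 = (S - R * q0) / (w th_x + R)"
    using Zp by (simp add: field_simps vx)
  have "\<bar>S - R * q0\<bar> \<le> R" using RQ S0 SR by linarith
  hence "\<bar>S - R * q0\<bar> / (w th_x + R) \<le> eps"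
    using Zp Rle by (simp add: divide_le_eq)
  thus "\<bar>p_joint x y / p_marg x - qy x th_x y\<bar> \<le> eps"
    using eq unfolding p_joint_eq p_marg_eq J Z q0_def[symmetric] using Zp by (simp add: abs_divide)
qed

end
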